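(* For any $\lambda_0,\lambda_1>0$ there is a function $f:(0,\infty)\to[0,\infty)$ with $\lim_{\epsilon\downarrow0}f(\epsilon)=0$ such that $$\mathcal{M}_{n+2}^{\epsilon,\lambda_0,\lambda_1}(x)\le f(\epsilon)\,\mathcal{M}_n^{\epsilon,\lambda_0,\lambda_1}(x)\quad\text{for all } n\in\mathbb{N},\ x\in\Gamma^\circ.$$
   Context: Fix $\alpha>\beta>0$. For $i\in\{0,1\}$ let $\Phi_i^t(x)=(i+(x_1-i)e^{-\alpha t},i+(x_2-i)e^{-\beta t})$ and $\Psi_i^t=\Phi_i^{-t}$. Let $\Gamma=\{(x_1,x_2):0\le x_2\le1,\ x_2^{\alpha/\beta}\le x_1\le1-(1-x_2)^{\alpha/\beta}\}$, $\Gamma^\circ$ its interior. For $\mathbf t=(t_1,\dots,t_n)\in(0,\infty)^n$ let $\Psi_0^{\mathbf t}$ be obtained by first applying $\Psi_0^{t_n}$, then $\Psi_1^{t_{n-1}}$, then $\Psi_0^{t_{n-2}}$, and so on alternately; for $0\le j\le n-1$, $\Psi_0^{(t_{n-j},\dots,t_n)}$ is the analogous map built from the last $j+1$ times. Let $T_0^n(x)=\{\mathbf t\in(0,\infty)^n:\Psi_0^{\mathbf t}(x)\in\Gamma^\circ\}$, $D(x)=\alpha\beta(x_1-x_2)$, and $M_n^\epsilon(x)=\{\mathbf t\in T_0^n(x):|D(\Psi_0^{(t_{n-j},\dots,t_n)}x)|<\epsilon,\ 0\le j\le n-1\}$. For real $\lambda_0,\lambda_1$, let $\lambda_0^{(n)}\in\mathbb{R}^n$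 be the vector with alternating entries $\lambda_0,\lambda_1$ whose last entry is $\lambda_0$, and $\mathcal{M}_n^{\epsilon,\lambda_0,\lambda_1}(x)=\int_{M_n^\epsilon(x)}e^{-\langle\lambda_0^{(n)},\mathbf t\rangle}\,d\mathbf t$. *)

theory Defs
  imports "HOL-Analysis.Analysis"
begin

text \<open>Points of the plane are pairs of reals. Time vectors in (0,inf)^n are
  functions on the index set {..<n}: entry t_k (k = 1..n) of the paper is t (k - 1).\<close>

text \<open>Psi_i^s = Phi_i^{-s}, i in {0,1}.\<close>
definition Psi :: "real \<Rightarrow> real \<Rightarrow> nat \<Rightarrow> real \<Rightarrow> real \<times> real \<Rightarrow> real \<times> real" where
  "Psi \<alpha> \<beta> i s x = (real i + (fst x - real i) * exp (\<alpha> * s),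
                      real i + (snd x - real i) * exp (\<beta> * s))"

text \<open>Psi_tail \<alpha> \<beta> t n j x = Psi_0^{(t_{n-j},...,t_n)}(x): first Psi_0^{t_n},
  then Psi_1^{t_{n-1}}, then Psi_0^{t_{n-2}}, ..., finally Psi_{j mod 2}^{t_{n-j}}.\<close>
fun Psi_tail :: "real \<Rightarrow> real \<Rightarrow> (nat \<Rightarrow> real) \<Rightarrow> nat \<Rightarrow> nat \<Rightarrow> real \<times> real \<Rightarrow> real \<times> real" where
  "Psi_tail \<alpha> \<beta> t n 0 x = Psi \<alpha> \<beta> 0 (t (n - 1)) x"
| "Psi_tail \<alpha> \<beta> t n (Suc j) x =
     Psi \<alpha> \<beta> (Suc j mod 2) (t (n - 1 - Suc j)) (Psi_tail \<alpha> \<beta> t n j x)"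

definition Psi_full :: "real \<Rightarrow> real \<Rightarrow> (nat \<Rightarrow> real) \<Rightarrow> nat \<Rightarrow> real \<times> real \<Rightarrow> real \<times> real" where
  "Psi_full \<alpha> \<beta> t n x = Psi_tail \<alpha> \<beta> t n (n - 1) x"

definition Gamma :: "real \<Rightarrow> real \<Rightarrow> (real \<times> real) set" where
  "Gamma \<alpha> \<beta> = {x. 0 \<le> snd x \<and> snd x \<le> 1 \<and> snd x powr (\<alpha> / \<beta>) \<le> fst x
                   \<and> fst x \<le> 1 - (1 - snd x) powr (\<alpha> / \<beta>)}"

definition Dfun :: "real \<Rightarrow> real \<Rightarrow> real \<times> real \<Rightarrow> real" where
  "Dfun \<alpha> \<beta> x = \<alpha> * \<beta> * (fst x - snd x)"

definition T0 :: "real \<Rightarrow> real \<Rightarrow> nat \<Rightarrow> real \<times> real \<Rightarrow> (nat \<Rightarrow> real) set" where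
  "T0 \<alpha> \<beta> n x = {t \<in> {..<n} \<rightarrow>\<^sub>E {0<..}. Psi_full \<alpha> \<beta> t n x \<in> interior (Gamma \<alpha> \<beta>)}"

definition Mset :: "real \<Rightarrow> real \<Rightarrow> nat \<Rightarrow> real \<Rightarrow> real \<times> real \<Rightarrow> (nat \<Rightarrow> real) set" where
  "Mset \<alpha> \<beta> n \<epsilon> x = {t \<in> T0 \<alpha> \<beta> n x. \<forall>j<n. \<bar>Dfun \<alpha> \<beta> (Psi_tail \<alpha> \<beta> t n j x)\<bar> < \<epsilon>}"

definition lamvec :: "real \<Rightarrow> real \<Rightarrow> nat \<Rightarrow> nat \<Rightarrow> real" where
  "lamvec l0 l1 n i = (if even (n - 1 - i) then l0 else l1)"

definition Mint :: "real \<Rightarrow> real \<Rightarrow> nat \<Rightarrow> real \<Rightarrow> real \<Rightarrow> real \<Rightarrow> real \<times> real \<Rightarrow> ennreal" where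
  "Mint \<alpha> \<beta> n \<epsilon> l0 l1 x =
     (\<integral>\<^sup>+ t. indicator (Mset \<alpha> \<beta> n \<epsilon> x) t
              * ennreal (exp (- (\<Sum>i<n. lamvec l0 l1 n i * t i)))
        \<partial>(PiM {..<n} (\<lambda>_. lborel)))"

end

theory Submission
  imports Defs
begin

lemma lemB:
  fixes \<alpha> \<beta> e p q b b' :: real
  assumes "0<\<beta>" "\<beta><\<alpha>" "0 \<le> b" "b \<le> b'"
    and h1: "\<bar>p*exp(\<alpha>*b) - q*exp(\<beta>*b)\<bar> < e"
    and h2: "\<bar>p*exp(\<alpha>*b') - q*exp(\<beta>*b')\<bar> < e"
    and g1: "1/2 \<le> p*exp(\<alpha>*b)" and g2: "p*exp(\<alpha>*b') \<le> 1"
  shows "b' - b < 6*e/(\<alpha>-\<beta>)"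
proof -
  define r where "r = b' - b"
  define g where "g = p*exp(\<alpha>*b)"
  define k where "k = q*exp(\<beta>*b)"
  define A where "A = exp(\<alpha>*r)"
  define B where "B = exp(\<beta>*r)"
  have r0: "r \<ge> 0" using assms by (simp add: r_def)
  have e1: "p*exp(\<alpha>*b') = g*A" unfolding g_def A_def r_def
    by (simp add: exp_add[symmetric] algebra_simps)
  have e2: "q*exp(\<beta>*b') = k*B" unfolding k_def B_def r_def
    by (simp add: exp_add[symmetric] algebra_simps)
  have B1: "1 \<le> B" unfolding B_def using r0 assms by simp
  have BA: "B \<le> A" unfolding A_def B_def using r0 assms by (simp add: mult_right_mono)
  have gA: "g*A \<le> 1" using g2 e1 by simp
  have g12: "1/2 \<le> g" using g1 g_def by simp
  have A2: "A \<le> 2"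
  proof -
    have "(1/2)*A \<le> g*A" using g12 B1 BA by (intro mult_right_mono) auto
    then show ?thesis using gA by simp
  qed
  have hk: "\<bar>g - k\<bar> < e" using h1 g_def k_def by simp
  have hA: "\<bar>g*A - k*B\<bar> < e" using h2 e1 e2 by simp
  have "g*(A-B) = (g*A - k*B) - (g-k)*B" by (simp add: algebra_simps)
  also have "\<dots> < e + e*B"
  proof -
    have "\<bar>(g-k)*B\<bar> \<le> e*B" using hk B1 by (simp add: abs_mult mult_right_mono)
    then show ?thesis using hA by linarith
  qed
  also have "\<dots> \<le> 3*e"
  proof -
    have "e*B \<le> e*2" using BA A2 hk by (intro mult_left_mono) auto
    then show ?thesis by linarith
  qed
  finally have "g*(A-B) < 3*e" .
  moreover have "(1/2)*(A-B) \<le> g*(A-B)" using g12 BA by (intro mult_right_mono) auto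
  ultimately have "(1/2)*(A-B) < 3*e" by linarith
  then have AB: "A - B < 6*e" by simp
  have "A - B = B*(exp((\<alpha>-\<beta>)*r) - 1)" unfolding A_def B_def
    by (simp add: algebra_simps exp_add[symmetric])
  also have "\<dots> \<ge> exp((\<alpha>-\<beta>)*r) - 1" using B1
  proof -
    have "exp((\<alpha>-\<beta>)*r) \<ge> 1" using assms r0 by simp
    then show ?thesis using B1 mult_right_mono[of 1 B "exp((\<alpha>-\<beta>)*r) - 1"] by simp
  qed
  finally have "(\<alpha>-\<beta>)*r < 6*e" using AB exp_ge_add_one_self[of "(\<alpha>-\<beta>)*r"] by linarith
  then show ?thesis using assms unfolding r_def by (simp add: field_simps)
qed

lemma Gamma_box:
  assumes "v \<in> Gamma \<alpha> \<beta>"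
  shows "0 \<le> fst v \<and> fst v \<le> 1 \<and> 0 \<le> snd v \<and> snd v \<le> 1"
proof -
  have "0 \<le> snd v powr (\<alpha>/\<beta>)" by simp
  moreover have "0 \<le> (1 - snd v) powr (\<alpha>/\<beta>)" by simp
  moreover have "0 \<le> snd v \<and> snd v \<le> 1 \<and> snd v powr (\<alpha> / \<beta>) \<le> fst v \<and> fst v \<le> 1 - (1 - snd v) powr (\<alpha> / \<beta>)"
    using assms unfolding Gamma_def by simp
  ultimately show ?thesis by linarith
qed

lemma Gamma_refl:
  assumes "v \<in> Gamma \<alpha> \<beta>"
  shows "(1 - fst v, 1 - snd v) \<in> Gamma \<alpha> \<beta>"
  using assms unfolding Gamma_def by simp

lemma Gamma_back0:
  assumes "0<\<beta>" "\<beta><\<alpha>" "v \<in> Gamma \<alpha> \<beta>" "0 \<le> s"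
  shows "(fst v * exp (- (\<alpha>* s)), snd v * exp (- (\<beta>* s))) \<in> Gamma \<alpha> \<beta>"
proof -
  define a where "a = \<alpha>/\<beta>"
  define c where "c = exp (- (\<beta>* s))"
  have a1: "1 \<le> a" using assms by (simp add: a_def)
  have c0: "0 < c" and c1: "c \<le> 1" using assms by (auto simp: c_def)
  have ca: "c powr a = exp (- (\<alpha>* s))" unfolding c_def a_def powr_def using assms by simp
  obtain v1 v2 where v: "v = (v1, v2)" by force
  have g: "0 \<le> v2" "v2 \<le> 1" "v2 powr a \<le> v1" "v1 \<le> 1 - (1 - v2) powr a"
    using assms(3) unfolding Gamma_def v a_def by auto
  have p1: "(v2*c) powr a \<le> v1 * c powr a"
    using g c0 by (simp add: powr_mult mult_right_mono)
  define \<phi> where "\<phi> = 1 - (1 - v2) powr a"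
  have \<phi>0: "0 \<le> \<phi>" unfolding \<phi>_def using g a1 by (simp add: powr_le1)
  have "v1 * c powr a \<le> \<phi> * c powr a" using g by (simp add: \<phi>_def mult_right_mono)
  also have "\<dots> \<le> \<phi> * c" using powr_le_one_le[OF c0 c1 a1] \<phi>0 by (simp add: mult_left_mono)
  also have "\<dots> \<le> 1 - (1 - v2*c) powr a"
  proof (cases "v2 = 1")
    case True
    have "(1 - c) powr a \<le> 1 - c"
    proof (cases "c = 1")
      case False
      then show ?thesis using powr_le_one_le[of "1-c" a] c0 c1 a1 by simp
    qed simp
    then show ?thesis using True by (simp add: \<phi>_def)
  next
    case False
    have cv: "convex_on {0<..} (\<lambda>x::real. x powr a)" using powr_convex a1 by simp
    have "((1 - c) *\<^sub>R 1 + c *\<^sub>R (1 - v2)) powr a \<le> (1 - c) * 1 powr a + c * (1-v2) powr a"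
      using convex_onD[OF cv, of c 1 "1 - v2"] c0 c1 g False by simp
    then have "(1 - v2*c) powr a \<le> (1 - c) + c * (1-v2) powr a" by (simp add: algebra_simps)
    then show ?thesis by (simp add: \<phi>_def algebra_simps)
  qed
  finally have p2: "v1 * c powr a \<le> 1 - (1 - v2*c) powr a" .
  have "0 \<le> v2*c" "v2*c \<le> 1" using g c0 c1 by (auto simp: mult_le_one)
  then show ?thesis using p1 p2 unfolding Gamma_def v a_def[symmetric] ca[symmetric] c_def[symmetric] by simp
qed

lemma Psi_back_Gamma:
  assumes "0<\<beta>" "\<beta><\<alpha>" "i < 2" "0 \<le> s" "Psi \<alpha> \<beta> i s u \<in> Gamma \<alpha> \<beta>"
  shows "u \<in> Gamma \<alpha> \<beta>"
proof -
  obtain u1 u2 where u: "u = (u1, u2)" by force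
  have ea: "exp (\<alpha> * s) * exp (- (\<alpha> * s)) = 1" "exp (\<beta> * s) * exp (- (\<beta> * s)) = 1"
    by (simp_all add: exp_minus field_simps)
  consider "i = 0" | "i = 1" using assms(3) by linarith
  then show ?thesis
  proof cases
    case 1
    have w: "(u1 * exp (\<alpha> * s), u2 * exp (\<beta> * s)) \<in> Gamma \<alpha> \<beta>"
      using assms(5) unfolding 1 u Psi_def by simp
    from Gamma_back0[OF assms(1,2) w assms(4)] show ?thesis
      unfolding u by (simp add: mult.assoc ea)
  next
    case 2
    have w: "(1 + (u1 - 1) * exp (\<alpha> * s), 1 + (u2 - 1) * exp (\<beta> * s)) \<in> Gamma \<alpha> \<beta>"
      using assms(5) unfolding 2 u Psi_def by simp
    from Gamma_refl[OF w] have w': "((1 - u1) * exp (\<alpha> * s), (1 - u2) * exp (\<beta> * s)) \<in> Gamma \<alpha> \<beta>"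
      by (simp add: algebra_simps)
    from Gamma_refl[OF Gamma_back0[OF assms(1,2) w' assms(4)]] show ?thesis
      unfolding u by (simp add: mult.assoc ea)
  qed
qed

lemma Psi_back_interior:
  assumes "0<\<beta>" "\<beta><\<alpha>" "i < 2" "0 \<le> s" "Psi \<alpha> \<beta> i s v \<in> interior (Gamma \<alpha> \<beta>)"
  shows "v \<in> interior (Gamma \<alpha> \<beta>)"
proof -
  define V where "V = (Psi \<alpha> \<beta> i s) -` interior (Gamma \<alpha> \<beta>)"
  have c: "continuous_on UNIV (Psi \<alpha> \<beta> i s)"
    unfolding Psi_def by (intro continuous_intros)
  have "open V" unfolding V_def by (rule open_vimage[OF open_interior c])
  moreover have "V \<subseteq> Gamma \<alpha> \<beta>"
  proof
    fix u assume "u \<in> V"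
    then have "Psi \<alpha> \<beta> i s u \<in> Gamma \<alpha> \<beta>" unfolding V_def using interior_subset by blast
    then show "u \<in> Gamma \<alpha> \<beta>" using Psi_back_Gamma assms(1-4) by blast
  qed
  moreover have "v \<in> V" using assms(5) V_def by simp
  ultimately show ?thesis using interior_maximal by blast
qed

definition Tset :: "real \<Rightarrow> real \<Rightarrow> real \<Rightarrow> real \<times> real \<Rightarrow> real set" where
  "Tset \<alpha> \<beta> e u = {b. 0 < b \<and> \<bar>fst u * exp (\<alpha> * b) - snd u * exp (\<beta> * b)\<bar> < e
      \<and> 1/2 \<le> fst u * exp (\<alpha> * b) \<and> fst u * exp (\<alpha> * b) \<le> 1}"

definition cval :: "real \<Rightarrow> real \<Rightarrow> real \<Rightarrow> real \<times> real \<Rightarrow> real" where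
  "cval \<alpha> \<beta> e u = Inf (Tset \<alpha> \<beta> e u)"

lemma Tset_bound:
  assumes "0<\<beta>" "\<beta><\<alpha>" "b \<in> Tset \<alpha> \<beta> e u"
  shows "cval \<alpha> \<beta> e u \<le> b \<and> b \<le> cval \<alpha> \<beta> e u + 6*e/(\<alpha>-\<beta>)"
proof
  have bdd: "bdd_below (Tset \<alpha> \<beta> e u)" unfolding Tset_def
    by (rule bdd_belowI[of _ 0]) auto
  show "cval \<alpha> \<beta> e u \<le> b" unfolding cval_def by (rule cInf_lower[OF assms(3) bdd])
  have "b - 6*e/(\<alpha>-\<beta>) \<le> Inf (Tset \<alpha> \<beta> e u)"
  proof (rule cInf_greatest)
    show "Tset \<alpha> \<beta> e u \<noteq> {}" using assms(3) by blast
    fix b' assume b': "b' \<in> Tset \<alpha> \<beta> e u"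
    have e0: "0 < e" using b' unfolding Tset_def by auto
    have d0: "0 \<le> 6*e/(\<alpha>-\<beta>)" using e0 assms by simp
    show "b - 6*e/(\<alpha>-\<beta>) \<le> b'"
    proof (cases "b \<le> b'")
      case True then show ?thesis using d0 by linarith
    next
      case False
      have "b - b' < 6*e/(\<alpha>-\<beta>)"
        using lemB[OF assms(1,2), where b=b' and b'=b and e=e and p="fst u" and q="snd u"] b' assms(3) False unfolding Tset_def by auto
      then show ?thesis by linarith
    qed
  qed
  then show "b \<le> cval \<alpha> \<beta> e u + 6*e/(\<alpha>-\<beta>)" unfolding cval_def by linarith
qed

definition uu :: "nat \<Rightarrow> real \<times> real \<Rightarrow> real \<times> real" where
  "uu i y = (if i = 0 then y else (1 - fst y, 1 - snd y))"

lemma core: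
  assumes "0<\<beta>" "\<beta><\<alpha>" "i = n mod 2" "i' = Suc n mod 2"
    and z: "z = Psi \<alpha> \<beta> i b y" and w: "w = Psi \<alpha> \<beta> i' a z"
    and "0 < a" "0 < b" and hz: "\<bar>fst z - snd z\<bar> < e" and hw: "\<bar>fst w - snd w\<bar> < e"
    and wG: "w \<in> Gamma \<alpha> \<beta>"
  shows "a < 6*e/(\<alpha>-\<beta>) \<or> b \<in> Tset \<alpha> \<beta> e (uu i y)"
proof -
  have wb: "0 \<le> fst w \<and> fst w \<le> 1 \<and> 0 \<le> snd w \<and> snd w \<le> 1" using Gamma_box[OF wG] .
  have ea: "1 \<le> exp (\<alpha> * a)" using assms by simp
  show ?thesis
  proof (cases "even n")
    case True
    then have i: "i = 0" "i' = 1" using assms(3,4) by auto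
    have z1: "fst z = fst y * exp (\<alpha> * b)" "snd z = snd y * exp (\<beta> * b)"
      using z i by (simp_all add: Psi_def)
    have w1: "1 - fst w = (1 - fst z) * exp (\<alpha> * a)" "1 - snd w = (1 - snd z) * exp (\<beta> * a)"
      using w i by (simp_all add: Psi_def algebra_simps)
    have zle: "fst z \<le> 1"
    proof -
      have "0 \<le> (1 - fst z) * exp (\<alpha> * a)" using w1 wb by simp
      then show ?thesis by (simp add: zero_le_mult_iff)
    qed
    show ?thesis
    proof (cases "1/2 \<le> fst z")
      case True
      then have "b \<in> Tset \<alpha> \<beta> e (uu i y)"
        unfolding Tset_def uu_def using i z1 hz zle assms(8) by simp
      then show ?thesis ..
    next
      case False
      have "a - 0 < 6*e/(\<alpha>-\<beta>)"
        using lemB[OF assms(1,2), where b=0 and b'=a and e=e and p="1 - fst z" and q="1 - snd z"] w1 hz hw wb False assms(7)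
        by (auto simp: abs_minus_commute)
      then show ?thesis by simp
    qed
  next
    case False
    then have i: "i = 1" "i' = 0" using assms(3,4) by presburger+
    have z1: "1 - fst z = (1 - fst y) * exp (\<alpha> * b)" "1 - snd z = (1 - snd y) * exp (\<beta> * b)"
      using z i by (simp_all add: Psi_def algebra_simps)
    have w1: "fst w = fst z * exp (\<alpha> * a)" "snd w = snd z * exp (\<beta> * a)"
      using w i by (simp_all add: Psi_def)
    have zge: "0 \<le> fst z"
    proof -
      have "0 \<le> fst z * exp (\<alpha> * a)" using w1 wb by simp
      then show ?thesis by (simp add: zero_le_mult_iff)
    qed
    show ?thesis
    proof (cases "fst z \<le> 1/2")
      case True
      have "\<bar>(1 - fst y) * exp (\<alpha> * b) - (1 - snd y) * exp (\<beta> * b)\<bar> < e"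
        using hz z1 by (simp add: abs_minus_commute)
      then have "b \<in> Tset \<alpha> \<beta> e (uu i y)"
        unfolding Tset_def uu_def using i z1 True zge assms(8) by simp
      then show ?thesis ..
    next
      case False
      have "a - 0 < 6*e/(\<alpha>-\<beta>)"
        using lemB[OF assms(1,2), where b=0 and b'=a and e=e and p="fst z" and q="snd z"] w1 hz hw wb False assms(7)
        by auto
      then show ?thesis by simp
    qed
  qed
qed


lemma meas_comp:
  assumes "k < n"
  shows "(\<lambda>t. t k) \<in> borel_measurable (PiM {..<n} (\<lambda>_. lborel :: real measure))"
  using assms measurable_component_singleton[of k "{..<n}" "\<lambda>_. lborel"] by simp

lemma meas_Psi_tail:
  assumes "1 \<le> n"
  shows "(\<lambda>t. Psi_tail \<alpha> \<beta> t n j x) \<in> borel_measurable (PiM {..<n} (\<lambda>_. lborel))"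
proof (induction j)
  case 0
  have [measurable]: "(\<lambda>t. t (n - 1)) \<in> borel_measurable (PiM {..<n} (\<lambda>_. lborel :: real measure))"
    using assms by (intro meas_comp) auto
  show ?case unfolding Psi_tail.simps Psi_def by (intro borel_measurable_Pair; measurable)
next
  case (Suc j)
  have [measurable]: "(\<lambda>t. t (n - 1 - Suc j)) \<in> borel_measurable (PiM {..<n} (\<lambda>_. lborel :: real measure))"
    using assms by (intro meas_comp) auto
  have [measurable]: "(\<lambda>t. Psi_tail \<alpha> \<beta> t n j x) \<in> PiM {..<n} (\<lambda>_. lborel) \<rightarrow>\<^sub>M borel \<Otimes>\<^sub>M borel"
    using Suc by (simp add: borel_prod)
  show ?case unfolding Psi_tail.simps Psi_def by (intro borel_measurable_Pair; measurable)
qed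

lemma Mset_alt:
  assumes "t \<in> space (PiM {..<n} (\<lambda>_. lborel :: real measure))"
  shows "t \<in> Mset \<alpha> \<beta> n \<epsilon> x \<longleftrightarrow> (\<forall>i\<in>{..<n}. 0 < t i) \<and> Psi_full \<alpha> \<beta> t n x \<in> interior (Gamma \<alpha> \<beta>)
     \<and> (\<forall>j\<in>{..<n}. \<bar>Dfun \<alpha> \<beta> (Psi_tail \<alpha> \<beta> t n j x)\<bar> < \<epsilon>)"
  using assms unfolding Mset_def T0_def space_PiM by (auto simp: PiE_iff)

lemma meas_F:
  assumes "1 \<le> n"
  shows "(\<lambda>t. indicator (Mset \<alpha> \<beta> n \<epsilon> x) t * ennreal (exp (- (\<Sum>i<n. lamvec l0 l1 n i * t i))))
     \<in> borel_measurable (PiM {..<n} (\<lambda>_. lborel))"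
proof -
  let ?M = "PiM {..<n} (\<lambda>_. lborel :: real measure)"
  have [measurable]: "\<And>j. (\<lambda>t. Psi_tail \<alpha> \<beta> t n j x) \<in> ?M \<rightarrow>\<^sub>M borel \<Otimes>\<^sub>M borel"
    using meas_Psi_tail[OF assms] by (simp add: borel_prod)
  have [measurable]: "\<And>i. i \<in> {..<n} \<Longrightarrow> (\<lambda>t. t i) \<in> borel_measurable ?M"
    by (intro meas_comp) auto
  have [measurable]: "interior (Gamma \<alpha> \<beta>) \<in> sets (borel \<Otimes>\<^sub>M borel)" 
    unfolding borel_prod by (intro borel_open) simp
  have p0: "i < n \<Longrightarrow> Measurable.pred ?M (\<lambda>t. 0 < t i)" for i by measurable
  have p1: "Measurable.pred ?M (\<lambda>t. \<forall>i\<in>{..<n}. 0 < t i)"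
    by (rule pred_intros_finite(3)) (auto intro: p0)
  have p2: "Measurable.pred ?M (\<lambda>t. Psi_full \<alpha> \<beta> t n x \<in> interior (Gamma \<alpha> \<beta>))"
    unfolding Psi_full_def by measurable
  have p3: "Measurable.pred ?M (\<lambda>t. \<forall>j\<in>{..<n}. \<bar>Dfun \<alpha> \<beta> (Psi_tail \<alpha> \<beta> t n j x)\<bar> < \<epsilon>)"
    unfolding Dfun_def by measurable
  have m1: "(\<lambda>t. if (\<forall>i\<in>{..<n}. 0 < t i) \<and> Psi_full \<alpha> \<beta> t n x \<in> interior (Gamma \<alpha> \<beta>)
     \<and> (\<forall>j\<in>{..<n}. \<bar>Dfun \<alpha> \<beta> (Psi_tail \<alpha> \<beta> t n j x)\<bar> < \<epsilon>) then 1 else (0::ennreal))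
     \<in> borel_measurable ?M"
    using p1 p2 p3 by (intro measurable_If) (auto intro: pred_intros_logic)
  have m2: "(\<lambda>t. indicator (Mset \<alpha> \<beta> n \<epsilon> x) t :: ennreal) \<in> borel_measurable ?M"
    by (rule measurable_cong[THEN iffD1, OF _ m1]) (simp add: Mset_alt split: split_indicator)
  have m3: "(\<lambda>t. ennreal (exp (- (\<Sum>i<n. lamvec l0 l1 n i * t i)))) \<in> borel_measurable ?M"
    by measurable
  show ?thesis using m2 m3 by (intro borel_measurable_times_ennreal)
qed


lemma psf_lborel: "product_sigma_finite (\<lambda>_. lborel :: real measure)"
  unfolding product_sigma_finite_def by (simp add: lborel.sigma_finite_measure_axioms)

lemma reindex_distr:
  fixes n :: nat
  shows
  "distr (PiM {2..<n+2} (\<lambda>_. lborel::real measure)) (PiM {..<n} (\<lambda>_. lborel)) (\<lambda>\<omega>. \<lambda>k\<in>{..<n}. \<omega> (k+2))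
    = PiM {..<n} (\<lambda>_. lborel)"
proof (rule product_sigma_finite.PiM_eqI[OF psf_lborel])
  show "finite {..<n}" by simp
  show "sets (distr (PiM {2..<n+2} (\<lambda>_. lborel::real measure)) (PiM {..<n} (\<lambda>_. lborel)) (\<lambda>\<omega>. \<lambda>k\<in>{..<n}. \<omega> (k+2)))
    = sets (PiM {..<n} (\<lambda>_. lborel))" by simp
  fix A :: "nat \<Rightarrow> real set" assume A: "\<And>i. i \<in> {..<n} \<Longrightarrow> A i \<in> sets lborel"
  let ?T = "(\<lambda>\<omega>. \<lambda>k\<in>{..<n}. \<omega> (k+2)) :: (nat \<Rightarrow> real) \<Rightarrow> (nat \<Rightarrow> real)"
  have Tm: "?T \<in> measurable (PiM {2..<n+2} (\<lambda>_. lborel::real measure)) (PiM {..<n} (\<lambda>_. lborel))"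
    by (intro measurable_restrict measurable_component_singleton) auto
  have pre: "?T -` PiE {..<n} A \<inter> space (PiM {2..<n+2} (\<lambda>_. lborel::real measure)) = PiE {2..<n+2} (\<lambda>k. A (k-2))"
  proof (intro set_eqI iffI)
    fix \<omega> show "\<omega> \<in> ?T -` PiE {..<n} A \<inter> space (PiM {2..<n+2} (\<lambda>_. lborel::real measure)) \<Longrightarrow> \<omega> \<in> PiE {2..<n+2} (\<lambda>k. A (k-2))"
    proof -
      assume h: "\<omega> \<in> ?T -` PiE {..<n} A \<inter> space (PiM {2..<n+2} (\<lambda>_. lborel::real measure))"
      then have e: "\<omega> \<in> extensional {2..<n+2}" unfolding space_PiM by (auto simp: PiE_def)
      have "\<omega> k \<in> A (k-2)" if k: "k \<in> {2..<n+2}" for k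
      proof -
        have "k - 2 < n" "k - 2 + 2 = k" using k by auto
        have "?T \<omega> \<in> PiE {..<n} A" using h by blast
        then have "?T \<omega> (k-2) \<in> A (k-2)" using \<open>k - 2 < n\<close> by (simp add: PiE_iff)
        then show ?thesis using \<open>k - 2 < n\<close> \<open>k - 2 + 2 = k\<close> by simp
      qed
      then show ?thesis using e unfolding PiE_iff by auto
    qed
  next
    fix \<omega> assume w: "\<omega> \<in> PiE {2..<n+2} (\<lambda>k. A (k-2))"
    have a: "?T \<omega> \<in> PiE {..<n} A"
    proof -
      have "\<omega> (x+2) \<in> A x" if "x < n" for x
        using w that unfolding PiE_iff by (metis add_diff_cancel_right' atLeastLessThan_iff le_add2 add_less_mono1)
      then show ?thesis by (auto simp: PiE_iff)
    qed
    have b: "\<omega> \<in> space (PiM {2..<n+2} (\<lambda>_. lborel::real measure))"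
      using w unfolding space_PiM PiE_def by auto
    show "\<omega> \<in> ?T -` PiE {..<n} A \<inter> space (PiM {2..<n+2} (\<lambda>_. lborel::real measure))"
      using a b by blast
  qed
  have "emeasure (distr (PiM {2..<n+2} (\<lambda>_. lborel)) (PiM {..<n} (\<lambda>_. lborel)) ?T) (PiE {..<n} A)
     = emeasure (PiM {2..<n+2} (\<lambda>_. lborel)) (?T -` PiE {..<n} A \<inter> space (PiM {2..<n+2} (\<lambda>_. lborel::real measure)))"
    by (rule emeasure_distr[OF Tm]) (use A in \<open>auto intro!: sets_PiM_I_finite\<close>)
  also have "\<dots> = emeasure (PiM {2..<n+2} (\<lambda>_. lborel)) (PiE {2..<n+2} (\<lambda>k. A (k-2)))"
    unfolding pre ..
  also have "\<dots> = (\<Prod>k\<in>{2..<n+2}. emeasure lborel (A (k-2)))"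
    using A by (intro product_sigma_finite.emeasure_PiM[OF psf_lborel]) auto
  also have "\<dots> = (\<Prod>i\<in>{..<n}. emeasure lborel (A i))"
  proof -
    have "{2..<n+2} = (\<lambda>i. i+2) ` {..<n}"
    proof (intro set_eqI iffI)
      fix x assume "x \<in> {2..<n+2}"
      then have "x - 2 \<in> {..<n}" "x = (x-2) + 2" by auto
      then show "x \<in> (\<lambda>i. i+2) ` {..<n}" by blast
    qed auto
    moreover have "inj_on (\<lambda>i::nat. i+2) {..<n}" by (simp add: inj_on_def)
    ultimately show ?thesis by (simp only: prod.reindex) simp
  qed
  finally show "emeasure (distr (PiM {2..<n+2} (\<lambda>_. lborel)) (PiM {..<n} (\<lambda>_. lborel)) ?T) (PiE {..<n} A)
     = (\<Prod>i\<in>{..<n}. emeasure lborel (A i))" .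
qed




definition Ef :: "real \<Rightarrow> real \<Rightarrow> ennreal" where
  "Ef L x = ennreal (indicator {0..} x * exp (- (L * x)))"

lemma Ef_meas[measurable]: "Ef L \<in> borel_measurable borel"
  unfolding Ef_def by measurable

lemma int_Ef:
  assumes "0 < L"
  shows "(\<integral>\<^sup>+ x. Ef L x \<partial>lborel) = ennreal (1/L)"
proof -
  have "((\<lambda>x::real. exp (- L * x)) has_integral exp (- L * 0) / L) {0..}"
    using has_integral_exp_minus_to_infinity[OF assms] .
  then have "((\<lambda>x. if x \<in> {0..} then exp (- (L * x)) else 0) has_integral 1 / L) UNIV"
    by (subst has_integral_restrict_UNIV) simp
  then have h: "((\<lambda>x. indicator {0..} x * exp (- (L * x))) has_integral 1 / L) UNIV"
    by (rule has_integral_eq[rotated]) (simp add: indicator_def)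
  show ?thesis unfolding Ef_def
    by (rule nn_integral_has_integral_lborel[OF _ _ h]) auto
qed

lemma prod2:
  fixes A B :: "real \<Rightarrow> ennreal"
  assumes [measurable]: "A \<in> borel_measurable borel" "B \<in> borel_measurable borel"
  shows "(\<integral>\<^sup>+ v. A (v (0::nat)) * B (v 1) \<partial>PiM {0,1} (\<lambda>_. lborel)) = (\<integral>\<^sup>+ a. A a \<partial>lborel) * (\<integral>\<^sup>+ b. B b \<partial>lborel)"
proof -
  define f where "f i = (if i = (0::nat) then A else B)" for i
  have "(\<integral>\<^sup>+ v. A (v (0::nat)) * B (v 1) \<partial>PiM {0,1} (\<lambda>_. lborel)) = (\<integral>\<^sup>+ v. (\<Prod>i\<in>{0,1}. f i (v i)) \<partial>PiM {0,1} (\<lambda>_. lborel))"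
    by (simp add: f_def)
  also have "\<dots> = (\<Prod>i\<in>{0,1}. integral\<^sup>N lborel (f i))"
    by (rule product_sigma_finite.product_nn_integral_prod[OF psf_lborel]) (auto simp: f_def)
  also have "\<dots> = (\<integral>\<^sup>+ a. A a \<partial>lborel) * (\<integral>\<^sup>+ b. B b \<partial>lborel)" by (simp add: f_def)
  finally show ?thesis .
qed

definition Hf :: "real \<Rightarrow> real \<Rightarrow> real \<Rightarrow> real \<Rightarrow> real \<Rightarrow> ennreal" where
  "Hf L \<delta> c a b = indicator {0<..\<delta>} a * Ef L b + Ef L a * indicator {c..c+\<delta>} b"

lemma int_Hf:
  assumes "0 < L" "0 \<le> \<delta>"
  shows "(\<integral>\<^sup>+ v. Hf L \<delta> c (v 0) (v 1) \<partial>PiM {0::nat,1} (\<lambda>_. lborel)) = ennreal (2 * \<delta> / L)"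
proof -
  let ?M = "PiM {0::nat,1} (\<lambda>_. lborel :: real measure)"
  have [measurable]: "(\<lambda>v. v i) \<in> borel_measurable ?M" if "i \<in> {0,1}" for i
    using that measurable_component_singleton[of i "{0::nat,1}" "\<lambda>_. lborel"] by simp
  have "(\<integral>\<^sup>+ v. Hf L \<delta> c (v 0) (v 1) \<partial>?M) =
     (\<integral>\<^sup>+ v. indicator {0<..\<delta>} (v 0) * Ef L (v 1) \<partial>?M) + (\<integral>\<^sup>+ v. Ef L (v 0) * indicator {c..c+\<delta>} (v 1) \<partial>?M)"
    unfolding Hf_def by (rule nn_integral_add) measurable
  also have "\<dots> = (\<integral>\<^sup>+ a. indicator {0<..\<delta>} a \<partial>lborel) * (\<integral>\<^sup>+ b. Ef L b \<partial>lborel)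
      + (\<integral>\<^sup>+ a. Ef L a \<partial>lborel) * (\<integral>\<^sup>+ b. indicator {c..c+\<delta>} b \<partial>lborel)"
    by (subst prod2, measurable)+
  also have "\<dots> = ennreal \<delta> * ennreal (1/L) + ennreal (1/L) * ennreal \<delta>"
    using assms by (simp add: int_Ef)
  also have "\<dots> = ennreal (2 * \<delta> / L)"
    using assms by (simp add: ennreal_mult'[symmetric] ennreal_plus[symmetric] del: ennreal_plus)
  finally show ?thesis .
qed


lemma tail_shift:
  assumes "j < n" "\<And>k. k < n \<Longrightarrow> t' k = t (k+2)"
  shows "Psi_tail \<alpha> \<beta> t (n+2) j x = Psi_tail \<alpha> \<beta> t' n j x"
  using assms(1)
proof (induction j)
  case 0
  then show ?case using assms(2)[of "n-1"] by simp
next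
  case (Suc j)
  have "n - 1 - Suc j < n" using Suc by simp
  moreover have "n - 1 - Suc j + 2 = n + 2 - 1 - Suc j" using Suc by simp
  ultimately have "t' (n - 1 - Suc j) = t (n + 2 - 1 - Suc j)" using assms(2) by metis
  then show ?case using Suc by simp
qed

lemma lamvec_ge:
  "min l0 l1 \<le> lamvec l0 l1 n i"
  unfolding lamvec_def by simp

lemma sum_split:
  fixes t :: "nat \<Rightarrow> real"
  shows "(\<Sum>i<n+2. lamvec l0 l1 (n+2) i * t i) = lamvec l0 l1 (n+2) 0 * t 0 + lamvec l0 l1 (n+2) 1 * t 1
     + (\<Sum>i<n. lamvec l0 l1 n i * (\<lambda>k\<in>{..<n}. t (k+2)) i)"
proof -
  have "(\<Sum>i<n+2. lamvec l0 l1 (n+2) i * t i) = (\<Sum>i<Suc (Suc n). lamvec l0 l1 (n+2) i * t i)" by simp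
  also have "\<dots> = lamvec l0 l1 (n+2) 0 * t 0 + (lamvec l0 l1 (n+2) 1 * t 1
       + (\<Sum>i<n. lamvec l0 l1 (n+2) (Suc (Suc i)) * t (Suc (Suc i))))"
    by (simp only: sum.lessThan_Suc_shift) simp
  also have "(\<Sum>i<n. lamvec l0 l1 (n+2) (Suc (Suc i)) * t (Suc (Suc i))) = (\<Sum>i<n. lamvec l0 l1 n i * (\<lambda>k\<in>{..<n}. t (k+2)) i)"
    by (rule sum.cong) (auto simp: lamvec_def)
  finally show ?thesis by simp
qed


lemma pointwise:
  fixes t :: "nat \<Rightarrow> real" and \<epsilon> \<alpha> \<beta> l0 l1 :: real and n :: nat and x :: "real \<times> real"
  assumes ab: "0<\<beta>" "\<beta><\<alpha>" and L: "0 < min l0 l1" and n1: "1 \<le> n"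
  defines "e \<equiv> \<epsilon> / (\<alpha>*\<beta>)"
  defines "\<delta> \<equiv> 6*e/(\<alpha>-\<beta>)"
  defines "t' \<equiv> (\<lambda>k\<in>{..<n}. t (k+2))"
  shows "indicator (Mset \<alpha> \<beta> (n+2) \<epsilon> x) t * ennreal (exp (- (\<Sum>i<n+2. lamvec l0 l1 (n+2) i * t i)))
    \<le> (indicator (Mset \<alpha> \<beta> n \<epsilon> x) t' * ennreal (exp (- (\<Sum>i<n. lamvec l0 l1 n i * t' i))))
       * Hf (min l0 l1) \<delta> (cval \<alpha> \<beta> e (uu (n mod 2) (Psi_full \<alpha> \<beta> t' n x))) (t 0) (t 1)"
proof (cases "t \<in> Mset \<alpha> \<beta> (n+2) \<epsilon> x")
  case False
  then show ?thesis by simp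
next
  case True
  let ?L = "min l0 l1"
  define y where "y = Psi_full \<alpha> \<beta> t' n x"
  define z where "z = Psi \<alpha> \<beta> (n mod 2) (t 1) y"
  define w where "w = Psi \<alpha> \<beta> (Suc n mod 2) (t 0) z"
  have tP: "t \<in> {..<n+2} \<rightarrow>\<^sub>E {0<..}" and wI: "Psi_full \<alpha> \<beta> t (n+2) x \<in> interior (Gamma \<alpha> \<beta>)"
    and tD: "\<And>j. j < n+2 \<Longrightarrow> \<bar>Dfun \<alpha> \<beta> (Psi_tail \<alpha> \<beta> t (n+2) j x)\<bar> < \<epsilon>"
  proof -
    have "t \<in> T0 \<alpha> \<beta> (n+2) x" "\<forall>j<n+2. \<bar>Dfun \<alpha> \<beta> (Psi_tail \<alpha> \<beta> t (n+2) j x)\<bar> < \<epsilon>"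
      using True unfolding Mset_def by simp_all
    then show "t \<in> {..<n+2} \<rightarrow>\<^sub>E {0<..}" "Psi_full \<alpha> \<beta> t (n+2) x \<in> interior (Gamma \<alpha> \<beta>)"
      "\<And>j. j < n+2 \<Longrightarrow> \<bar>Dfun \<alpha> \<beta> (Psi_tail \<alpha> \<beta> t (n+2) j x)\<bar> < \<epsilon>"
      unfolding T0_def by simp_all
  qed
  have t0: "0 < t 0" and t1: "0 < t 1" using tP by auto
  have t'k: "\<And>k. k < n \<Longrightarrow> t' k = t (k+2)" unfolding t'_def by simp
  obtain m where m: "n = Suc m" using n1 by (cases n) auto
  have ym: "Psi_tail \<alpha> \<beta> t (n+2) m x = y"
    unfolding y_def Psi_full_def using tail_shift[of m n t' t] t'k m by simp
  have zeq: "Psi_tail \<alpha> \<beta> t (n+2) n x = z"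
    unfolding z_def using ym m by simp
  have weq: "Psi_full \<alpha> \<beta> t (n+2) x = w"
    unfolding w_def Psi_full_def using zeq by simp
  have abpos: "0 < \<alpha>*\<beta>" using ab by simp
  have Dz: "\<bar>fst z - snd z\<bar> < e"
  proof -
    have "\<bar>Dfun \<alpha> \<beta> z\<bar> < \<epsilon>" using tD[of n] zeq by simp
    then have "\<alpha>*\<beta> * \<bar>fst z - snd z\<bar> < \<epsilon>" using ab by (simp add: Dfun_def abs_mult)
    then show ?thesis unfolding e_def using abpos by (simp add: field_simps)
  qed
  have Dw: "\<bar>fst w - snd w\<bar> < e"
  proof -
    have "\<bar>Dfun \<alpha> \<beta> w\<bar> < \<epsilon>" using tD[of "n+1"] weq unfolding Psi_full_def by simp
    then have "\<alpha>*\<beta> * \<bar>fst w - snd w\<bar> < \<epsilon>" using ab by (simp add: Dfun_def abs_mult)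
    then show ?thesis unfolding e_def using abpos by (simp add: field_simps)
  qed
  have wG: "w \<in> interior (Gamma \<alpha> \<beta>)" using wI weq by simp
  have zG: "z \<in> interior (Gamma \<alpha> \<beta>)"
    using Psi_back_interior[OF ab, of "Suc n mod 2" "t 0" z] wG t0 unfolding w_def by simp
  have yG: "y \<in> interior (Gamma \<alpha> \<beta>)"
    using Psi_back_interior[OF ab, of "n mod 2" "t 1" y] zG t1 unfolding z_def by simp
  have t'M: "t' \<in> Mset \<alpha> \<beta> n \<epsilon> x"
  proof -
    have "t' \<in> {..<n} \<rightarrow>\<^sub>E {0<..}" unfolding t'_def using tP by auto
    moreover have "\<forall>j<n. \<bar>Dfun \<alpha> \<beta> (Psi_tail \<alpha> \<beta> t' n j x)\<bar> < \<epsilon>"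
    proof (intro allI impI)
      fix j assume j: "j < n"
      have "Psi_tail \<alpha> \<beta> t (n+2) j x = Psi_tail \<alpha> \<beta> t' n j x" by (rule tail_shift[of j n t' t, OF j t'k])
      then show "\<bar>Dfun \<alpha> \<beta> (Psi_tail \<alpha> \<beta> t' n j x)\<bar> < \<epsilon>" using tD[of j] j by simp
    qed
    ultimately show ?thesis using yG unfolding Mset_def T0_def y_def by simp
  qed
  have cases: "t 0 < \<delta> \<or> t 1 \<in> Tset \<alpha> \<beta> e (uu (n mod 2) y)"
    unfolding \<delta>_def
    by (rule core[OF ab refl refl z_def w_def t0 t1 Dz Dw]) (use wG interior_subset in blast)
  have Hge: "ennreal (exp (- (?L * t 0)) * exp (- (?L * t 1))) \<le> Hf ?L \<delta> (cval \<alpha> \<beta> e (uu (n mod 2) y)) (t 0) (t 1)"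
    using cases
  proof
    assume "t 0 < \<delta>"
    then have "Hf ?L \<delta> (cval \<alpha> \<beta> e (uu (n mod 2) y)) (t 0) (t 1) \<ge> ennreal (exp (- (?L * t 1)))"
      unfolding Hf_def Ef_def using t0 t1 by (simp add: indicator_def)
    moreover have "exp (- (?L * t 0)) * exp (- (?L * t 1)) \<le> exp (- (?L * t 1))"
      using L t0 by simp
    ultimately show ?thesis by (meson ennreal_leI order_trans)
  next
    assume "t 1 \<in> Tset \<alpha> \<beta> e (uu (n mod 2) y)"
    then have "cval \<alpha> \<beta> e (uu (n mod 2) y) \<le> t 1 \<and> t 1 \<le> cval \<alpha> \<beta> e (uu (n mod 2) y) + \<delta>"
      unfolding \<delta>_def by (rule Tset_bound[OF ab])
    then have "Hf ?L \<delta> (cval \<alpha> \<beta> e (uu (n mod 2) y)) (t 0) (t 1) \<ge> ennreal (exp (- (?L * t 0)))"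
      unfolding Hf_def Ef_def using t0 t1 by (simp add: indicator_def)
    moreover have "exp (- (?L * t 0)) * exp (- (?L * t 1)) \<le> exp (- (?L * t 0))"
      using L t1 by simp
    ultimately show ?thesis by (meson ennreal_leI order_trans)
  qed
  have wt: "exp (- (lamvec l0 l1 (n+2) 0 * t 0 + lamvec l0 l1 (n+2) 1 * t 1)) \<le> exp (- (?L * t 0)) * exp (- (?L * t 1))"
  proof -
    have "?L * t 0 \<le> lamvec l0 l1 (n+2) 0 * t 0" using lamvec_ge t0 by (intro mult_right_mono) auto
    moreover have "?L * t 1 \<le> lamvec l0 l1 (n+2) 1 * t 1" using lamvec_ge t1 by (intro mult_right_mono) auto
    ultimately show ?thesis by (simp add: exp_add[symmetric])
  qed
  define S where "S = (\<Sum>i<n. lamvec l0 l1 n i * t' i)"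
  have "indicator (Mset \<alpha> \<beta> (n+2) \<epsilon> x) t * ennreal (exp (- (\<Sum>i<n+2. lamvec l0 l1 (n+2) i * t i)))
      = ennreal (exp (- (lamvec l0 l1 (n+2) 0 * t 0 + lamvec l0 l1 (n+2) 1 * t 1)) * exp (- S))"
    using True unfolding sum_split[of l0 l1 n t] t'_def[symmetric] S_def by (simp add: exp_add[symmetric] algebra_simps)
  also have "\<dots> \<le> ennreal (exp (- S)) * ennreal (exp (- (?L * t 0)) * exp (- (?L * t 1)))"
    using wt by (simp add: ennreal_mult'[symmetric] mult.commute)
  also have "\<dots> \<le> ennreal (exp (- S)) * Hf ?L \<delta> (cval \<alpha> \<beta> e (uu (n mod 2) y)) (t 0) (t 1)"
    using Hge by (rule mult_left_mono) simp
  finally show ?thesis using t'M unfolding y_def S_def by simp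
qed


lemma main_ineq:
  fixes \<alpha> \<beta> l0 l1 \<epsilon> :: real and n :: nat and x :: "real \<times> real"
  assumes ab: "0<\<beta>" "\<beta><\<alpha>" and L: "0 < min l0 l1" and n1: "1 \<le> n" and eps: "0 < \<epsilon>"
  shows "Mint \<alpha> \<beta> (n + 2) \<epsilon> l0 l1 x \<le> ennreal (2 * (6*(\<epsilon>/(\<alpha>*\<beta>))/(\<alpha>-\<beta>)) / min l0 l1) * Mint \<alpha> \<beta> n \<epsilon> l0 l1 x"
proof -
  define e where "e = \<epsilon> / (\<alpha>*\<beta>)"
  define \<delta> where "\<delta> = 6*e/(\<alpha>-\<beta>)"
  define Lm where "Lm = min l0 l1"
  define F where "F m t = indicator (Mset \<alpha> \<beta> m \<epsilon> x) t * ennreal (exp (- (\<Sum>i<m. lamvec l0 l1 m i * t i)))"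
    for m and t :: "nat \<Rightarrow> real"
  define K where "K = {2..<n+2}"
  define J where "J = {0::nat, 1}"
  define sh where "sh \<omega> = (\<lambda>k\<in>{..<n}. \<omega> (k+2))" for \<omega> :: "nat \<Rightarrow> real"
  define C where "C \<omega> = cval \<alpha> \<beta> e (uu (n mod 2) (Psi_full \<alpha> \<beta> (sh \<omega>) n x))" for \<omega>
  have d0: "0 \<le> \<delta>" unfolding \<delta>_def e_def using ab eps by simp
  have Lm0: "0 < Lm" using L Lm_def by simp
  have KJ: "{..<n+2} = K \<union> J" unfolding K_def J_def by auto
  have mF: "\<And>m. 1 \<le> m \<Longrightarrow> F m \<in> borel_measurable (PiM {..<m} (\<lambda>_. lborel))"
    unfolding F_def by (rule meas_F)
  have mF2: "F (n+2) \<in> borel_measurable (PiM (K \<union> J) (\<lambda>_. lborel))"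
    using mF[of "n+2"] unfolding KJ by simp
  have Tm: "sh \<in> measurable (PiM K (\<lambda>_. lborel::real measure)) (PiM {..<n} (\<lambda>_. lborel))"
    unfolding sh_def K_def by (intro measurable_restrict measurable_component_singleton) auto
  have mFsh: "(\<lambda>\<omega>. F n (sh \<omega>)) \<in> borel_measurable (PiM K (\<lambda>_. lborel))"
    using measurable_comp[OF Tm mF[OF n1]] by (simp add: comp_def)
  have "Mint \<alpha> \<beta> (n + 2) \<epsilon> l0 l1 x = integral\<^sup>N (PiM {..<n+2} (\<lambda>_. lborel)) (F (n+2))"
    unfolding Mint_def F_def ..
  also have "\<dots> = integral\<^sup>N (PiM (K \<union> J) (\<lambda>_. lborel)) (F (n+2))"
    unfolding KJ ..
  also have "\<dots> = (\<integral>\<^sup>+ \<omega>. (\<integral>\<^sup>+ v. F (n+2) (merge K J (\<omega>, v)) \<partial>PiM J (\<lambda>_. lborel)) \<partial>PiM K (\<lambda>_. lborel))"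
    by (rule product_sigma_finite.product_nn_integral_fold[OF psf_lborel _ _ _ mF2])
       (auto simp: K_def J_def)
  also have "\<dots> \<le> (\<integral>\<^sup>+ \<omega>. F n (sh \<omega>) * ennreal (2 * \<delta> / Lm) \<partial>PiM K (\<lambda>_. lborel))"
  proof (rule nn_integral_mono)
    fix \<omega> :: "nat \<Rightarrow> real"
    have [measurable]: "(\<lambda>v. v i) \<in> borel_measurable (PiM {0::nat,1} (\<lambda>_. lborel :: real measure))" if "i \<in> {0,1}" for i
      using that measurable_component_singleton[of i "{0::nat,1}" "\<lambda>_. lborel"] by simp
    have mH: "(\<lambda>v. Hf Lm \<delta> (C \<omega>) (v 0) (v 1)) \<in> borel_measurable (PiM {0::nat,1} (\<lambda>_. lborel))"
      unfolding Hf_def by measurable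
    have "(\<integral>\<^sup>+ v. F (n+2) (merge K J (\<omega>, v)) \<partial>PiM J (\<lambda>_. lborel))
        \<le> (\<integral>\<^sup>+ v. F n (sh \<omega>) * Hf Lm \<delta> (C \<omega>) (v 0) (v 1) \<partial>PiM J (\<lambda>_. lborel))"
    proof (rule nn_integral_mono)
      fix v :: "nat \<Rightarrow> real"
      let ?t = "merge K J (\<omega>, v)"
      have sht: "(\<lambda>k\<in>{..<n}. ?t (k+2)) = sh \<omega>"
        unfolding sh_def K_def by (intro restrict_ext) (simp add: merge_def)
      have t01: "?t 0 = v 0" "?t 1 = v 1" unfolding K_def J_def by (simp_all add: merge_def)
      show "F (n+2) ?t \<le> F n (sh \<omega>) * Hf Lm \<delta> (C \<omega>) (v 0) (v 1)"
        using pointwise[OF ab L n1, of \<epsilon> x ?t] unfolding F_def C_def sht t01 \<delta>_def e_def Lm_def .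
    qed
    also have "\<dots> = F n (sh \<omega>) * (\<integral>\<^sup>+ v. Hf Lm \<delta> (C \<omega>) (v 0) (v 1) \<partial>PiM J (\<lambda>_. lborel))"
      using mH unfolding J_def by (rule nn_integral_cmult)
    also have "\<dots> = F n (sh \<omega>) * ennreal (2 * \<delta> / Lm)"
      unfolding J_def using int_Hf[OF Lm0 d0] by simp
    finally show "(\<integral>\<^sup>+ v. F (n+2) (merge K J (\<omega>, v)) \<partial>PiM J (\<lambda>_. lborel)) \<le> F n (sh \<omega>) * ennreal (2 * \<delta> / Lm)" .
  qed
  also have "\<dots> = (\<integral>\<^sup>+ \<omega>. F n (sh \<omega>) \<partial>PiM K (\<lambda>_. lborel)) * ennreal (2 * \<delta> / Lm)"
    by (rule nn_integral_multc[OF mFsh])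
  also have "(\<integral>\<^sup>+ \<omega>. F n (sh \<omega>) \<partial>PiM K (\<lambda>_. lborel)) = integral\<^sup>N (distr (PiM K (\<lambda>_. lborel)) (PiM {..<n} (\<lambda>_. lborel)) sh) (F n)"
    by (rule nn_integral_distr[OF Tm, symmetric]) (use mF[OF n1] in simp)
  also have "distr (PiM K (\<lambda>_. lborel)) (PiM {..<n} (\<lambda>_. lborel)) sh = PiM {..<n} (\<lambda>_. lborel)"
    unfolding K_def sh_def by (rule reindex_distr)
  also have "integral\<^sup>N (PiM {..<n} (\<lambda>_. lborel)) (F n) = Mint \<alpha> \<beta> n \<epsilon> l0 l1 x"
    unfolding Mint_def F_def ..
  finally show ?thesis unfolding \<delta>_def e_def Lm_def by (simp add: mult.commute)
qed

theorem lemma7p8: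
  fixes \<alpha> \<beta> l0 l1 :: real
  assumes "\<beta> > 0" and "\<alpha> > \<beta>" and "l0 > 0" and "l1 > 0"
  shows "\<exists>f :: real \<Rightarrow> real. (\<forall>\<epsilon>>0. f \<epsilon> \<ge> 0) \<and> (f \<longlongrightarrow> 0) (at_right 0) \<and>
     (\<forall>\<epsilon>>0. \<forall>n\<ge>1. \<forall>x\<in>interior (Gamma \<alpha> \<beta>).
        Mint \<alpha> \<beta> (n + 2) \<epsilon> l0 l1 x \<le> ennreal (f \<epsilon>) * Mint \<alpha> \<beta> n \<epsilon> l0 l1 x)"
proof -
  define f where "f \<epsilon> = 2 * (6*(\<epsilon>/(\<alpha>*\<beta>))/(\<alpha>-\<beta>)) / min l0 l1" for \<epsilon>
  have L: "0 < min l0 l1" using assms by simp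
  have ab: "0 < \<alpha>*\<beta>" "0 < \<alpha> - \<beta>" using assms by simp_all
  show ?thesis
  proof (intro exI[of _ f] conjI allI impI ballI)
    fix \<epsilon> :: real assume "0 < \<epsilon>"
    then show "0 \<le> f \<epsilon>" unfolding f_def using L ab by simp
  next
    have "((\<lambda>\<epsilon>. 2 * (6*(\<epsilon>/(\<alpha>*\<beta>))/(\<alpha>-\<beta>)) / min l0 l1) \<longlongrightarrow> 2 * (6*(0/(\<alpha>*\<beta>))/(\<alpha>-\<beta>)) / min l0 l1) (at_right 0)"
      by (intro tendsto_intros) (use L ab in auto)
    then show "(f \<longlongrightarrow> 0) (at_right 0)" unfolding f_def by simp
  next
    fix \<epsilon> :: real and n :: nat and x assume "0 < \<epsilon>" "1 \<le> n"
    then show "Mint \<alpha> \<beta> (n + 2) \<epsilon> l0 l1 x \<le> ennreal (f \<epsilon>) * Mint \<alpha> \<beta> n \<epsilon> l0 l1 x"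
      unfolding f_def using main_ineq[OF assms(1,2) L] by simp
  qed
qed


end
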